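(* Let $X$ be a connected Hausdorff topological space and let $\mathbf{F}$ be an infinite-dimensional $1$-independent Banach space of continuous functions over $X$ such that every bounded linear operator on $\mathbf{F}$ is of the form $\lambda\,\mathrm{Id}+K$ with $\lambda\in\mathbb{C}$ and $K$ compact. Then every multiplier of $\mathbf{F}$ is a constant function.
   Context: A Banach space of continuous functions over $X$ is a linear subspace of the space $C(X)$ of continuous complex functions with a complete norm whose topology is stronger than the compact-open topology. It is $1$-independent if for each $x\in X$ some $f\in\mathbf{F}$ has $f(x)\ne0$. $\omega:X\to\mathbb{C}$ is a multiplier of $\mathbf{F}$ if $\omega f\in\mathbf{F}$ for all $f\in\mathbf{F}$ and $f\mapsto\omega f$ is bounded on $\mathbf{F}$. *)

theory Defs
  imports "HOL-Analysis.Analysis"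
begin

definition cfun_subspace :: "('a::topological_space \<Rightarrow> complex) set \<Rightarrow> bool" where
  "cfun_subspace F \<longleftrightarrow>
     (\<forall>f\<in>F. continuous_on UNIV f) \<and>
     (\<lambda>x. 0) \<in> F \<and>
     (\<forall>f\<in>F. \<forall>g\<in>F. (\<lambda>x. f x + g x) \<in> F) \<and>
     (\<forall>c::complex. \<forall>f\<in>F. (\<lambda>x. c * f x) \<in> F)"

definition is_norm_on :: "('a \<Rightarrow> complex) set \<Rightarrow> (('a \<Rightarrow> complex) \<Rightarrow> real) \<Rightarrow> bool" where
  "is_norm_on F N \<longleftrightarrow>
     (\<forall>f\<in>F. N f \<ge> 0) \<and>
     (\<forall>f\<in>F. N f = 0 \<longleftrightarrow> f = (\<lambda>x. 0)) \<and>
     (\<forall>c::complex. \<forall>f\<in>F. N (\<lambda>x. c * f x) = cmod c * N f) \<and>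
     (\<forall>f\<in>F. \<forall>g\<in>F. N (\<lambda>x. f x + g x) \<le> N f + N g)"

definition norm_complete :: "('a \<Rightarrow> complex) set \<Rightarrow> (('a \<Rightarrow> complex) \<Rightarrow> real) \<Rightarrow> bool" where
  "norm_complete F N \<longleftrightarrow>
     (\<forall>s::nat \<Rightarrow> ('a \<Rightarrow> complex). (\<forall>n. s n \<in> F) \<longrightarrow>
        (\<forall>e>0. \<exists>M. \<forall>m\<ge>M. \<forall>n\<ge>M. N (\<lambda>x. s m x - s n x) < e) \<longrightarrow>
        (\<exists>g\<in>F. (\<lambda>n. N (\<lambda>x. s n x - g x)) \<longlonglongrightarrow> 0))"

text \<open>The norm topology is stronger than the compact-open topology (= topology of uniform
  convergence on compact sets for complex-valued functions): the identity map from (F,N) to F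
  with the compact-open topology is continuous, i.e. (by linearity) continuous at 0.\<close>
definition stronger_than_compact_open ::
  "('a::topological_space \<Rightarrow> complex) set \<Rightarrow> (('a \<Rightarrow> complex) \<Rightarrow> real) \<Rightarrow> bool" where
  "stronger_than_compact_open F N \<longleftrightarrow>
     (\<forall>K. compact K \<longrightarrow> (\<forall>e>0. \<exists>d>0. \<forall>f\<in>F. N f < d \<longrightarrow> (\<forall>x\<in>K. cmod (f x) < e)))"

definition banach_space_of_cfuns ::
  "('a::topological_space \<Rightarrow> complex) set \<Rightarrow> (('a \<Rightarrow> complex) \<Rightarrow> real) \<Rightarrow> bool" where
  "banach_space_of_cfuns F N \<longleftrightarrow>
     cfun_subspace F \<and> is_norm_on F N \<and> norm_complete F N \<and> stronger_than_compact_open F N"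

definition one_independent :: "('a \<Rightarrow> complex) set \<Rightarrow> bool" where
  "one_independent F \<longleftrightarrow> (\<forall>x. \<exists>f\<in>F. f x \<noteq> 0)"

definition cfun_span :: "('a \<Rightarrow> complex) set \<Rightarrow> ('a \<Rightarrow> complex) set" where
  "cfun_span S = {h. \<exists>c. h = (\<lambda>x. \<Sum>g\<in>S. c g * g x)}"

definition infinite_dimensional :: "('a \<Rightarrow> complex) set \<Rightarrow> bool" where
  "infinite_dimensional F \<longleftrightarrow> (\<forall>S. finite S \<and> S \<subseteq> F \<longrightarrow> \<not> F \<subseteq> cfun_span S)"

definition linear_op_on ::
  "('a \<Rightarrow> complex) set \<Rightarrow> (('a \<Rightarrow> complex) \<Rightarrow> ('a \<Rightarrow> complex)) \<Rightarrow> bool" where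
  "linear_op_on F T \<longleftrightarrow>
     (\<forall>f\<in>F. T f \<in> F) \<and>
     (\<forall>f\<in>F. \<forall>g\<in>F. T (\<lambda>x. f x + g x) = (\<lambda>x. T f x + T g x)) \<and>
     (\<forall>c::complex. \<forall>f\<in>F. T (\<lambda>x. c * f x) = (\<lambda>x. c * T f x))"

definition bounded_op_on ::
  "('a \<Rightarrow> complex) set \<Rightarrow> (('a \<Rightarrow> complex) \<Rightarrow> real) \<Rightarrow> (('a \<Rightarrow> complex) \<Rightarrow> ('a \<Rightarrow> complex)) \<Rightarrow> bool" where
  "bounded_op_on F N T \<longleftrightarrow> linear_op_on F T \<and> (\<exists>C. \<forall>f\<in>F. N (T f) \<le> C * N f)"

text \<open>Compact operator: linear, and the image of the unit ball is relatively compact in (F,N),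
  i.e. every sequence in the unit ball has a subsequence whose image converges in F.\<close>
definition compact_op_on ::
  "('a \<Rightarrow> complex) set \<Rightarrow> (('a \<Rightarrow> complex) \<Rightarrow> real) \<Rightarrow> (('a \<Rightarrow> complex) \<Rightarrow> ('a \<Rightarrow> complex)) \<Rightarrow> bool" where
  "compact_op_on F N K \<longleftrightarrow> linear_op_on F K \<and>
     (\<forall>s::nat \<Rightarrow> ('a \<Rightarrow> complex). (\<forall>n. s n \<in> F \<and> N (s n) \<le> 1) \<longrightarrow>
        (\<exists>r g. strict_mono r \<and> g \<in> F \<and> (\<lambda>n. N (\<lambda>x. K (s (r n)) x - g x)) \<longlonglongrightarrow> 0))"

definition multiplier ::
  "('a \<Rightarrow> complex) set \<Rightarrow> (('a \<Rightarrow> complex) \<Rightarrow> real) \<Rightarrow> ('a \<Rightarrow> complex) \<Rightarrow> bool" where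
  "multiplier F N \<omega> \<longleftrightarrow> (\<forall>f\<in>F. (\<lambda>x. \<omega> x * f x) \<in> F) \<and>
     (\<exists>C. \<forall>f\<in>F. N (\<lambda>x. \<omega> x * f x) \<le> C * N f)"

end

theory Submission
  imports Defs
begin


locale bfs =
  fixes F :: "('a::topological_space \<Rightarrow> complex) set" and N :: "('a \<Rightarrow> complex) \<Rightarrow> real"
  assumes sub: "cfun_subspace F" and nrm: "is_norm_on F N" and sco: "stronger_than_compact_open F N"
begin

lemma zero_in: "(\<lambda>x. 0) \<in> F" using sub unfolding cfun_subspace_def by blast
lemma add_in: "f \<in> F \<Longrightarrow> g \<in> F \<Longrightarrow> (\<lambda>x. f x + g x) \<in> F" using sub unfolding cfun_subspace_def by blast
lemma scale_in: "f \<in> F \<Longrightarrow> (\<lambda>x. c * f x) \<in> F" using sub unfolding cfun_subspace_def by blast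
lemma diff_in: "f \<in> F \<Longrightarrow> g \<in> F \<Longrightarrow> (\<lambda>x. f x - g x) \<in> F"
proof -
  assume "f \<in> F" "g \<in> F"
  then have "(\<lambda>x. f x + (-1) * g x) \<in> F" by (intro add_in scale_in)
  then show ?thesis by simp
qed
lemma N_nonneg: "f \<in> F \<Longrightarrow> N f \<ge> 0" using nrm unfolding is_norm_on_def by blast
lemma N_zero_iff: "f \<in> F \<Longrightarrow> N f = 0 \<longleftrightarrow> f = (\<lambda>x. 0)" using nrm unfolding is_norm_on_def by blast
lemma N_scale: "f \<in> F \<Longrightarrow> N (\<lambda>x. c * f x) = cmod c * N f" using nrm unfolding is_norm_on_def by blast
lemma N_add: "f \<in> F \<Longrightarrow> g \<in> F \<Longrightarrow> N (\<lambda>x. f x + g x) \<le> N f + N g" using nrm unfolding is_norm_on_def by blast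
lemma N_zero: "N (\<lambda>x. 0) = 0" using N_zero_iff zero_in by blast

lemma N_diff_commute: "f \<in> F \<Longrightarrow> g \<in> F \<Longrightarrow> N (\<lambda>x. f x - g x) = N (\<lambda>x. g x - f x)"
proof -
  assume a: "f \<in> F" "g \<in> F"
  have e: "(\<lambda>x. g x - f x) = (\<lambda>x. (-1) * (f x - g x))" by (simp add: algebra_simps)
  have "N (\<lambda>x. g x - f x) = N (\<lambda>x. (-1) * (f x - g x))" by (subst e) (rule refl)
  also have "\<dots> = N (\<lambda>x. f x - g x)" using N_scale[OF diff_in[OF a], of "-1"] by simp
  finally show ?thesis by simp
qed

lemma N_diff_tri: "f \<in> F \<Longrightarrow> g \<in> F \<Longrightarrow> h \<in> F \<Longrightarrow>
   N (\<lambda>x. f x - h x) \<le> N (\<lambda>x. f x - g x) + N (\<lambda>x. g x - h x)"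
proof -
  assume a: "f \<in> F" "g \<in> F" "h \<in> F"
  have "(\<lambda>x. f x - h x) = (\<lambda>x. (f x - g x) + (g x - h x))" by simp
  then show ?thesis using N_add[OF diff_in[OF a(1,2)] diff_in[OF a(2,3)]] by simp
qed

lemma N_rev_tri: "f \<in> F \<Longrightarrow> g \<in> F \<Longrightarrow> N f \<le> N g + N (\<lambda>x. f x - g x)"
proof -
  assume a: "f \<in> F" "g \<in> F"
  have "f = (\<lambda>x. g x + (f x - g x))" by simp
  then have "N f = N (\<lambda>x. g x + (f x - g x))" by simp
  also have "\<dots> \<le> N g + N (\<lambda>x. f x - g x)" using N_add[OF a(2) diff_in[OF a]] .
  finally show ?thesis .
qed

lemma eval_bound: "\<exists>E>0. \<forall>f\<in>F. cmod (f x) \<le> E * N f"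
proof -
  have "compact {x}" by simp
  with sco obtain d where d: "d > 0" "\<forall>f\<in>F. N f < d \<longrightarrow> (\<forall>y\<in>{x}. cmod (f y) < 1)"
    unfolding stronger_than_compact_open_def by (meson zero_less_one)
  have "cmod (f x) \<le> (2/d) * N f" if f: "f \<in> F" for f
  proof (cases "N f = 0")
    case True then show ?thesis using N_zero_iff f by (simp add: N_zero)
  next
    case False
    then have Np: "N f > 0" using N_nonneg[OF f] by linarith
    define c where "c = complex_of_real (d / (2 * N f))"
    have cm: "cmod c = d / (2 * N f)" unfolding c_def norm_of_real using Np d by simp
    have "N (\<lambda>y. c * f y) = cmod c * N f" by (rule N_scale[OF f])
    also have "\<dots> = (d / (2 * N f)) * N f" using cm by simp
    also have "\<dots> = d/2" using Np by simp
    finally have "N (\<lambda>y. c * f y) < d" using d by simp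
    then have "cmod (c * f x) < 1" using d(2) scale_in[OF f] by blast
    then have "(d / (2 * N f)) * cmod (f x) < 1" using Np d by (simp add: c_def norm_mult norm_divide)
    then have "d * cmod (f x) < 2 * N f" using Np by (simp add: field_simps)
    then show ?thesis using d by (simp add: field_simps)
  qed
  then show ?thesis using d by (intro exI[of _ "2/d"]) auto
qed

lemma pointwise:
  assumes "\<And>n. s n \<in> F" "g \<in> F" "(\<lambda>n. N (\<lambda>x. s n x - g x)) \<longlonglongrightarrow> 0"
  shows "(\<lambda>n. s n x) \<longlonglongrightarrow> g x"
proof -
  obtain E where E: "E > 0" "\<forall>f\<in>F. cmod (f x) \<le> E * N f" using eval_bound by blast
  have lim: "(\<lambda>n. E * N (\<lambda>x. s n x - g x)) \<longlonglongrightarrow> 0" using tendsto_mult_right_zero[OF assms(3)] by simp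
  moreover have ev: "eventually (\<lambda>n. norm (s n x - g x) \<le> E * N (\<lambda>x. s n x - g x)) sequentially"
  proof (rule always_eventually, rule allI)
    fix n
    have "(\<lambda>x. s n x - g x) \<in> F" using diff_in[OF assms(1) assms(2)] .
    from E(2)[rule_format, OF this] show "norm (s n x - g x) \<le> E * N (\<lambda>x. s n x - g x)" by simp
  qed
  ultimately have "(\<lambda>n. s n x - g x) \<longlonglongrightarrow> 0"
    using Lim_null_comparison[of "\<lambda>n. s n x - g x" "\<lambda>n. E * N (\<lambda>x. s n x - g x)" sequentially] ev lim by blast
  then show ?thesis by (simp add: LIM_zero_iff)
qed

end



locale cm = bfs F N for F :: "('a::topological_space \<Rightarrow> complex) set" and N +
  fixes \<psi> :: "'a \<Rightarrow> complex" and Cp :: real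
  assumes pm: "\<And>f. f \<in> F \<Longrightarrow> (\<lambda>x. \<psi> x * f x) \<in> F"
  and pb: "\<And>f. f \<in> F \<Longrightarrow> N (\<lambda>x. \<psi> x * f x) \<le> Cp * N f"
  and pc: "\<And>s::nat \<Rightarrow> 'a \<Rightarrow> complex. (\<And>n. s n \<in> F \<and> N (s n) \<le> 1) \<Longrightarrow>
     \<exists>r g. strict_mono r \<and> g \<in> F \<and> (\<lambda>n. N (\<lambda>x. \<psi> x * s (r n) x - g x)) \<longlonglongrightarrow> 0"
  and onei: "\<And>x. \<exists>f\<in>F. f x \<noteq> 0"
begin

lemma no_sep:
  fixes u :: "nat \<Rightarrow> 'a \<Rightarrow> complex"
  assumes u: "\<And>n. u n \<in> F \<and> N (u n) \<le> 1" and dp: "\<delta> > 0"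
    and sep: "\<And>n m. n < m \<Longrightarrow> \<delta> \<le> N (\<lambda>x. \<psi> x * u n x - \<psi> x * u m x)"
  shows False
proof -
  obtain r g where r: "strict_mono r" and g: "g \<in> F"
    and lim: "(\<lambda>n. N (\<lambda>x. \<psi> x * u (r n) x - g x)) \<longlonglongrightarrow> 0"
    using pc[of u, OF u] by blast
  have "eventually (\<lambda>n. N (\<lambda>x. \<psi> x * u (r n) x - g x) < \<delta>/2) sequentially"
    by (rule order_tendstoD(2)[OF lim]) (use dp in simp)
  then obtain M where M: "\<And>n. n \<ge> M \<Longrightarrow> N (\<lambda>x. \<psi> x * u (r n) x - g x) < \<delta>/2"
    unfolding eventually_sequentially by blast
  have F1: "(\<lambda>x. \<psi> x * u (r M) x) \<in> F" and F2: "(\<lambda>x. \<psi> x * u (r (Suc M)) x) \<in> F"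
    using pm u by auto
  have "r M < r (Suc M)" using r by (simp add: strict_mono_def)
  then have "\<delta> \<le> N (\<lambda>x. \<psi> x * u (r M) x - \<psi> x * u (r (Suc M)) x)" by (rule sep)
  also have "\<dots> \<le> N (\<lambda>x. \<psi> x * u (r M) x - g x) + N (\<lambda>x. g x - \<psi> x * u (r (Suc M)) x)"
    using N_diff_tri[OF F1 g F2] by simp
  also have "N (\<lambda>x. g x - \<psi> x * u (r (Suc M)) x) = N (\<lambda>x. \<psi> x * u (r (Suc M)) x - g x)"
    using N_diff_commute[OF g F2] by simp
  finally show False using M[of M] M[of "Suc M"] by simp
qed

lemma normalize:
  assumes g: "g \<in> F" "g \<noteq> (\<lambda>x. 0)"
  shows "(\<lambda>x. complex_of_real (1 / N g) * g x) \<in> F \<and> N (\<lambda>x. complex_of_real (1 / N g) * g x) = 1"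
proof -
  have "N g \<noteq> 0" using N_zero_iff g by blast
  then have pos: "N g > 0" using N_nonneg[OF g(1)] by linarith
  define c where "c = complex_of_real (1 / N g)"
  have cc: "cmod c = 1 / N g" unfolding c_def norm_of_real using pos by simp
  have "N (\<lambda>x. c * g x) = cmod c * N g" by (rule N_scale[OF g(1)])
  also have "\<dots> = 1" using cc pos by simp
  finally show ?thesis using scale_in[OF g(1), of c] unfolding c_def by simp
qed

end

locale cm2 = cm F N \<psi> Cp for F :: "('a::topological_space \<Rightarrow> complex) set" and N \<psi> Cp +
  fixes \<mu> :: complex and x0 :: 'a
  assumes mu: "\<psi> x0 = \<mu>" and mu0: "\<mu> \<noteq> 0"
begin

definition \<beta> where "\<beta> x = \<psi> x - \<mu>"

lemma beta_eq: "(\<lambda>x. \<beta> x * f x) = (\<lambda>x. \<psi> x * f x - \<mu> * f x)"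
  by (simp add: \<beta>_def algebra_simps)

lemma bm: "f \<in> F \<Longrightarrow> (\<lambda>x. \<beta> x * f x) \<in> F"
  unfolding beta_eq by (intro diff_in pm scale_in)

lemma bpow: "f \<in> F \<Longrightarrow> (\<lambda>x. \<beta> x ^ n * f x) \<in> F"
proof (induction n)
  case 0 then show ?case by simp
next
  case (Suc n)
  have "(\<lambda>x. \<beta> x ^ Suc n * f x) = (\<lambda>x. \<beta> x * (\<beta> x ^ n * f x))" by (simp add: algebra_simps)
  then show ?case using bm[OF Suc.IH[OF Suc.prems]] by simp
qed

definition inR where "inR n h \<longleftrightarrow> (\<exists>g\<in>F. h = (\<lambda>x. \<beta> x ^ n * g x))"

lemma inR_F: "inR n h \<Longrightarrow> h \<in> F" unfolding inR_def using bpow by blast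

lemma inR_add: "inR n h \<Longrightarrow> inR n k \<Longrightarrow> inR n (\<lambda>x. h x + k x)"
  unfolding inR_def
proof (elim bexE)
  fix g1 g2 assume "g1 \<in> F" "h = (\<lambda>x. \<beta> x ^ n * g1 x)" "g2 \<in> F" "k = (\<lambda>x. \<beta> x ^ n * g2 x)"
  then show "\<exists>g\<in>F. (\<lambda>x. h x + k x) = (\<lambda>x. \<beta> x ^ n * g x)"
    by (intro bexI[of _ "\<lambda>x. g1 x + g2 x"] add_in) (auto simp: algebra_simps)
qed

lemma inR_scale: "inR n h \<Longrightarrow> inR n (\<lambda>x. c * h x)"
  unfolding inR_def
proof (elim bexE)
  fix g1 assume "g1 \<in> F" "h = (\<lambda>x. \<beta> x ^ n * g1 x)"
  then show "\<exists>g\<in>F. (\<lambda>x. c * h x) = (\<lambda>x. \<beta> x ^ n * g x)"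
    by (intro bexI[of _ "\<lambda>x. c * g1 x"] scale_in) (auto simp: algebra_simps)
qed

lemma inR_diff: "inR n h \<Longrightarrow> inR n k \<Longrightarrow> inR n (\<lambda>x. h x - k x)"
proof -
  assume "inR n h" "inR n k"
  then have "inR n (\<lambda>x. h x + (-1) * k x)" by (intro inR_add inR_scale)
  then show ?thesis by simp
qed

lemma inR_zero: "inR n (\<lambda>x. 0)"
  unfolding inR_def using zero_in by (intro bexI[of _ "\<lambda>x. 0"]) auto

lemma inR_mono: "inR m h \<Longrightarrow> n \<le> m \<Longrightarrow> inR n h"
  unfolding inR_def
proof (elim bexE)
  fix g1 assume a: "g1 \<in> F" "h = (\<lambda>x. \<beta> x ^ m * g1 x)" and nm: "n \<le> m"
  have "h = (\<lambda>x. \<beta> x ^ n * (\<beta> x ^ (m - n) * g1 x))"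
    using a(2) nm by (auto simp: power_add[symmetric])
  then show "\<exists>g\<in>F. h = (\<lambda>x. \<beta> x ^ n * g x)" using bpow[OF a(1), of "m - n"]
    by (intro bexI[of _ "\<lambda>x. \<beta> x ^ (m - n) * g1 x"]) auto
qed

lemma inR_beta: "inR n h \<Longrightarrow> inR (Suc n) (\<lambda>x. \<beta> x * h x)"
  unfolding inR_def
proof (elim bexE)
  fix g1 assume "g1 \<in> F" "h = (\<lambda>x. \<beta> x ^ n * g1 x)"
  then show "\<exists>g\<in>F. (\<lambda>x. \<beta> x * h x) = (\<lambda>x. \<beta> x ^ Suc n * g x)"
    by (intro bexI[of _ g1]) (auto simp: algebra_simps)
qed

lemma inR_psi: "inR n h \<Longrightarrow> inR n (\<lambda>x. \<psi> x * h x)"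
  unfolding inR_def
proof (elim bexE)
  fix g1 assume "g1 \<in> F" "h = (\<lambda>x. \<beta> x ^ n * g1 x)"
  then show "\<exists>g\<in>F. (\<lambda>x. \<psi> x * h x) = (\<lambda>x. \<beta> x ^ n * g x)"
    by (intro bexI[of _ "\<lambda>x. \<psi> x * g1 x"] pm) (auto simp: algebra_simps)
qed

lemma beta_x0: "\<beta> x0 = 0" unfolding \<beta>_def mu by simp

lemma bpow_low:
  assumes c: "c > 0" "\<forall>f\<in>F. c * N f \<le> N (\<lambda>x. \<beta> x * f x)" and f: "f \<in> F"
  shows "c ^ n * N f \<le> N (\<lambda>x. \<beta> x ^ n * f x)"
proof (induction n)
  case 0 then show ?case by simp
next
  case (Suc n)
  have e: "(\<lambda>x. \<beta> x ^ Suc n * f x) = (\<lambda>x. \<beta> x * (\<beta> x ^ n * f x))" by (simp add: algebra_simps)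
  have "c ^ Suc n * N f = c * (c ^ n * N f)" by simp
  also have "\<dots> \<le> c * N (\<lambda>x. \<beta> x ^ n * f x)" using Suc.IH c(1) by simp
  also have "\<dots> \<le> N (\<lambda>x. \<beta> x * (\<beta> x ^ n * f x))" using c(2) bpow[OF f] by blast
  finally show ?case unfolding e .
qed

lemma case1:
  assumes c: "c > 0" "\<forall>f\<in>F. c * N f \<le> N (\<lambda>x. \<beta> x * f x)"
  shows False
proof -
  obtain f0 where f0: "f0 \<in> F" "f0 x0 \<noteq> 0" using onei by blast
  obtain E where E: "E > 0" "\<forall>f\<in>F. cmod (f x0) \<le> E * N f" using eval_bound by blast
  define d0 where "d0 = cmod (f0 x0) / E"
  have d0: "d0 > 0" using f0 E unfolding d0_def by simp
  define S where "S n = {N (\<lambda>x. \<beta> x ^ n * f0 x - h x) | h. inR (Suc n) h}" for n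
  define D where "D n = Inf (S n)" for n
  have low: "c ^ n * d0 \<le> N (\<lambda>x. \<beta> x ^ n * f0 x - h x)" if h: "inR (Suc n) h" for n h
  proof -
    obtain g where g: "g \<in> F" "h = (\<lambda>x. \<beta> x ^ Suc n * g x)" using h unfolding inR_def by blast
    have q: "(\<lambda>x. f0 x - \<beta> x * g x) \<in> F" using diff_in[OF f0(1) bm[OF g(1)]] .
    have "(\<lambda>x. \<beta> x ^ n * f0 x - h x) = (\<lambda>x. \<beta> x ^ n * (f0 x - \<beta> x * g x))"
      using g(2) by (simp add: algebra_simps)
    then have eq: "N (\<lambda>x. \<beta> x ^ n * f0 x - h x) = N (\<lambda>x. \<beta> x ^ n * (f0 x - \<beta> x * g x))" by simp
    have "cmod (f0 x0) \<le> E * N (\<lambda>x. f0 x - \<beta> x * g x)"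
      using E(2)[rule_format, OF q] by (simp add: beta_x0)
    then have "d0 \<le> N (\<lambda>x. f0 x - \<beta> x * g x)" unfolding d0_def using E(1) by (simp add: field_simps)
    then have "c ^ n * d0 \<le> c ^ n * N (\<lambda>x. f0 x - \<beta> x * g x)" using c(1) by (simp add: mult_left_mono)
    also have "\<dots> \<le> N (\<lambda>x. \<beta> x ^ n * (f0 x - \<beta> x * g x))" by (rule bpow_low[OF c q])
    finally show ?thesis using eq by simp
  qed
  have Sne: "S n \<noteq> {}" for n unfolding S_def using inR_zero by blast
  have Sbdd: "bdd_below (S n)" for n unfolding S_def bdd_below_def using low by blast
  have Dlow: "c ^ n * d0 \<le> D n" for n
    unfolding D_def by (rule cInf_greatest[OF Sne]) (auto simp: S_def intro: low)
  have Dpos: "D n > 0" for n using Dlow[of n] c(1) d0 by (smt (verit) mult_pos_pos zero_less_power)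
  have Dle: "D n \<le> N (\<lambda>x. \<beta> x ^ n * f0 x - h x)" if "inR (Suc n) h" for n h
    unfolding D_def by (rule cInf_lower[OF _ Sbdd]) (use that in \<open>auto simp: S_def\<close>)
  have "\<exists>h. inR (Suc n) h \<and> N (\<lambda>x. \<beta> x ^ n * f0 x - h x) < 2 * D n" for n
  proof -
    have "Inf (S n) < 2 * D n" using Dpos[of n] unfolding D_def by simp
    from cInf_lessD[OF Sne this] show ?thesis unfolding S_def by blast
  qed
  then obtain hs where hs: "\<And>n. inR (Suc n) (hs n)" "\<And>n. N (\<lambda>x. \<beta> x ^ n * f0 x - hs n x) < 2 * D n"
    by metis
  define w where "w n = (\<lambda>x. \<beta> x ^ n * f0 x - hs n x)" for n
  define a where "a n = N (w n)" for n
  have wR: "inR n (w n)" for n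
    unfolding w_def using inR_diff[of n "\<lambda>x. \<beta> x ^ n * f0 x" "hs n"] inR_mono[OF hs(1)[of n], of n] f0(1)
    unfolding inR_def by auto
  have aD: "D n \<le> a n" "a n < 2 * D n" for n
    unfolding a_def w_def using Dle[OF hs(1)] hs(2) by auto
  have apos: "a n > 0" for n using aD(1)[of n] Dpos[of n] by linarith
  define u where "u n = (\<lambda>x. complex_of_real (1 / a n) * w n x)" for n
  have uR: "inR n (u n)" for n unfolding u_def by (rule inR_scale[OF wR])
  have uF: "u n \<in> F" for n using inR_F[OF uR] .
  have wF: "w n \<in> F" for n using inR_F[OF wR] .
  have uN: "N (u n) = 1" for n
  proof -
    have "N (u n) = cmod (complex_of_real (1 / a n)) * a n" unfolding u_def a_def by (rule N_scale[OF wF])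
    also have "\<dots> = 1" using apos[of n] unfolding norm_of_real by simp
    finally show ?thesis .
  qed
  have key: "cmod \<mu> / 2 \<le> N (\<lambda>x. \<mu> * u n x + k x)" if k: "inR (Suc n) k" for n k
  proof -
    define h2 where "h2 = (\<lambda>x. hs n x - (complex_of_real (a n) / \<mu>) * k x)"
    have h2R: "inR (Suc n) h2" unfolding h2_def by (intro inR_diff inR_scale hs(1) k)
    have an: "complex_of_real (a n) \<noteq> 0" using apos[of n] by simp
    have e: "(\<lambda>x. \<mu> * u n x + k x) = (\<lambda>x. (\<mu> / complex_of_real (a n)) * (\<beta> x ^ n * f0 x - h2 x))"
      unfolding u_def w_def h2_def using an mu0 by (auto simp: field_simps)
    have qF: "(\<lambda>x. \<beta> x ^ n * f0 x - h2 x) \<in> F" using diff_in[OF bpow[OF f0(1)] inR_F[OF h2R]] .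
    have "N (\<lambda>x. \<mu> * u n x + k x) = cmod (\<mu> / complex_of_real (a n)) * N (\<lambda>x. \<beta> x ^ n * f0 x - h2 x)"
      unfolding e by (rule N_scale[OF qF])
    also have "cmod (\<mu> / complex_of_real (a n)) = cmod \<mu> / a n"
      using apos[of n] by (simp add: norm_divide norm_of_real)
    finally have eqN: "N (\<lambda>x. \<mu> * u n x + k x) = cmod \<mu> / a n * N (\<lambda>x. \<beta> x ^ n * f0 x - h2 x)" .
    have "a n / 2 \<le> N (\<lambda>x. \<beta> x ^ n * f0 x - h2 x)" using aD[of n] Dle[OF h2R] by linarith
    then have "cmod \<mu> / a n * (a n / 2) \<le> cmod \<mu> / a n * N (\<lambda>x. \<beta> x ^ n * f0 x - h2 x)"
      using apos[of n] by (intro mult_left_mono) auto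
    then show ?thesis using eqN apos[of n] by simp
  qed
  have sep: "cmod \<mu> / 2 \<le> N (\<lambda>x. \<psi> x * u n x - \<psi> x * u m x)" if nm: "n < m" for n m
  proof -
    define k where "k = (\<lambda>x. \<beta> x * u n x - \<psi> x * u m x)"
    have kR: "inR (Suc n) k" unfolding k_def
      using nm by (intro inR_diff inR_beta uR inR_psi inR_mono[OF uR]) auto
    have "(\<lambda>x. \<psi> x * u n x - \<psi> x * u m x) = (\<lambda>x. \<mu> * u n x + k x)"
      unfolding k_def \<beta>_def by (auto simp: algebra_simps)
    then show ?thesis using key[OF kR] by simp
  qed
  show False
    by (rule no_sep[of u "cmod \<mu> / 2"]) (use uF uN mu0 sep in auto)
qed

lemma eigen: "\<exists>e\<in>F. N e = 1 \<and> (\<forall>x. \<psi> x * e x = \<mu> * e x)"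
proof (cases "\<exists>c>0. \<forall>f\<in>F. c * N f \<le> N (\<lambda>x. \<beta> x * f x)")
  case True then show ?thesis using case1 by blast
next
  case False
  have "\<exists>f. f \<in> F \<and> N (\<lambda>x. \<beta> x * f x) < inverse (real (Suc k)) * N f" for k
  proof -
    have "inverse (real (Suc k)) > 0" by simp
    with False obtain f where "f \<in> F" "\<not> (inverse (real (Suc k)) * N f \<le> N (\<lambda>x. \<beta> x * f x))" by blast
    then show ?thesis by (intro exI[of _ f]) (auto simp: not_le)
  qed
  then obtain fs where fs: "\<And>k. fs k \<in> F" "\<And>k. N (\<lambda>x. \<beta> x * fs k x) < inverse (real (Suc k)) * N (fs k)"
    by metis
  have fpos: "N (fs k) > 0" for k
  proof -
    have "0 \<le> N (\<lambda>x. \<beta> x * fs k x)" using N_nonneg[OF bm[OF fs(1)]] .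
    then have "0 < inverse (real (Suc k)) * N (fs k)" using fs(2)[of k] by linarith
    then show ?thesis by (simp add: zero_less_mult_iff)
  qed
  define v where "v k = (\<lambda>x. complex_of_real (1 / N (fs k)) * fs k x)" for k
  have vF: "v k \<in> F" for k unfolding v_def by (rule scale_in[OF fs(1)])
  have vN: "N (v k) = 1" for k
  proof -
    have "N (v k) = cmod (complex_of_real (1 / N (fs k))) * N (fs k)" unfolding v_def by (rule N_scale[OF fs(1)])
    also have "\<dots> = 1" using fpos[of k] unfolding norm_of_real by simp
    finally show ?thesis .
  qed
  have bv: "N (\<lambda>x. \<beta> x * v k x) < inverse (real (Suc k))" for k
  proof -
    have eqf: "(\<lambda>x. \<beta> x * v k x) = (\<lambda>x. complex_of_real (1 / N (fs k)) * (\<beta> x * fs k x))"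
      unfolding v_def by (auto simp: algebra_simps)
    have "N (\<lambda>x. \<beta> x * v k x) = cmod (complex_of_real (1 / N (fs k))) * N (\<lambda>x. \<beta> x * fs k x)"
      unfolding eqf by (rule N_scale[OF bm[OF fs(1)]])
    also have "\<dots> = N (\<lambda>x. \<beta> x * fs k x) / N (fs k)" using fpos[of k] unfolding norm_of_real by simp
    also have "\<dots> < inverse (real (Suc k))" using fs(2)[of k] fpos[of k] by (simp add: divide_less_eq)
    finally show ?thesis .
  qed
  have bv0: "(\<lambda>k. N (\<lambda>x. \<beta> x * v k x)) \<longlonglongrightarrow> 0"
  proof (rule tendsto_sandwich[OF _ _ tendsto_const LIMSEQ_inverse_real_of_nat])
    show "eventually (\<lambda>k. 0 \<le> N (\<lambda>x. \<beta> x * v k x)) sequentially"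
      using N_nonneg[OF bm[OF vF]] by simp
    show "eventually (\<lambda>k. N (\<lambda>x. \<beta> x * v k x) \<le> inverse (real (Suc k))) sequentially"
      by (intro always_eventually allI less_imp_le bv)
  qed
  obtain r g where r: "strict_mono r" and g: "g \<in> F"
    and lim: "(\<lambda>n. N (\<lambda>x. \<psi> x * v (r n) x - g x)) \<longlonglongrightarrow> 0"
  proof -
    have "\<And>n. v n \<in> F \<and> N (v n) \<le> 1" using vF vN by simp
    from pc[of v, OF this] show ?thesis using that by blast
  qed
  have bvr: "(\<lambda>k. N (\<lambda>x. \<beta> x * v (r k) x)) \<longlonglongrightarrow> 0"
    using LIMSEQ_subseq_LIMSEQ[OF bv0 r] by (simp add: o_def)
  define cc where "cc k = N (\<lambda>x. \<mu> * v (r k) x - g x)" for k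
  have cc_le: "cc k \<le> N (\<lambda>x. \<beta> x * v (r k) x) + N (\<lambda>x. \<psi> x * v (r k) x - g x)" for k
  proof -
    have "cc k \<le> N (\<lambda>x. \<mu> * v (r k) x - \<psi> x * v (r k) x) + N (\<lambda>x. \<psi> x * v (r k) x - g x)"
      unfolding cc_def using N_diff_tri[OF scale_in[OF vF] pm[OF vF] g] by simp
    also have "N (\<lambda>x. \<mu> * v (r k) x - \<psi> x * v (r k) x) = N (\<lambda>x. \<psi> x * v (r k) x - \<mu> * v (r k) x)"
      by (rule N_diff_commute[OF scale_in[OF vF] pm[OF vF]])
    also have "\<dots> = N (\<lambda>x. \<beta> x * v (r k) x)" unfolding beta_eq ..
    finally show ?thesis .
  qed
  have cc0: "cc \<longlonglongrightarrow> 0"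
  proof (rule tendsto_sandwich[OF _ _ tendsto_const tendsto_add[OF bvr lim, simplified]])
    show "eventually (\<lambda>k. 0 \<le> cc k) sequentially" unfolding cc_def
      using N_nonneg[OF diff_in[OF scale_in[OF vF] g]] by simp
    show "eventually (\<lambda>k. cc k \<le> N (\<lambda>x. \<beta> x * v (r k) x) + N (\<lambda>x. \<psi> x * v (r k) x - g x)) sequentially"
      using cc_le by simp
  qed
  have gnz: "g \<noteq> (\<lambda>x. 0)"
  proof
    assume g0: "g = (\<lambda>x. 0)"
    have "cc k = cmod \<mu>" for k unfolding cc_def g0 using N_scale[OF vF] vN by simp
    then have "cc = (\<lambda>k. cmod \<mu>)" by (rule ext)
    then have "(\<lambda>k. cmod \<mu>) \<longlonglongrightarrow> 0" using cc0 by simp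
    then show False using mu0 by (simp add: LIMSEQ_const_iff)
  qed
  have Cnn: "Cp \<ge> 0"
  proof -
    have "N (v 0) = 1" by (rule vN)
    have "0 \<le> N (\<lambda>x. \<psi> x * v 0 x)" using N_nonneg[OF pm[OF vF]] .
    also have "\<dots> \<le> Cp * N (v 0)" using pb[OF vF] .
    finally show ?thesis using vN[of 0] by simp
  qed
  have eigle: "N (\<lambda>x. \<psi> x * g x - \<mu> * g x) \<le> Cp * cc k + cmod \<mu> * N (\<lambda>x. \<psi> x * v (r k) x - g x)" for k
  proof -
    have A1: "(\<lambda>x. \<psi> x * (\<mu> * v (r k) x)) \<in> F" by (intro pm scale_in vF)
    have "N (\<lambda>x. \<psi> x * g x - \<mu> * g x) \<le> N (\<lambda>x. \<psi> x * g x - \<psi> x * (\<mu> * v (r k) x)) + N (\<lambda>x. \<psi> x * (\<mu> * v (r k) x) - \<mu> * g x)"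
      by (rule N_diff_tri[OF pm[OF g] A1 scale_in[OF g]])
    also have "N (\<lambda>x. \<psi> x * g x - \<psi> x * (\<mu> * v (r k) x)) \<le> Cp * cc k"
    proof -
      have "(\<lambda>x. \<psi> x * g x - \<psi> x * (\<mu> * v (r k) x)) = (\<lambda>x. \<psi> x * (g x - \<mu> * v (r k) x))"
        by (auto simp: algebra_simps)
      moreover have "N (\<lambda>x. \<psi> x * (g x - \<mu> * v (r k) x)) \<le> Cp * N (\<lambda>x. g x - \<mu> * v (r k) x)"
        by (rule pb[OF diff_in[OF g scale_in[OF vF]]])
      moreover have "N (\<lambda>x. g x - \<mu> * v (r k) x) = cc k" unfolding cc_def
        by (rule N_diff_commute[OF g scale_in[OF vF]])
      ultimately show ?thesis by simp
    qed
    also have "N (\<lambda>x. \<psi> x * (\<mu> * v (r k) x) - \<mu> * g x) = cmod \<mu> * N (\<lambda>x. \<psi> x * v (r k) x - g x)"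
    proof -
      have "(\<lambda>x. \<psi> x * (\<mu> * v (r k) x) - \<mu> * g x) = (\<lambda>x. \<mu> * (\<psi> x * v (r k) x - g x))"
        by (auto simp: algebra_simps)
      then show ?thesis using N_scale[OF diff_in[OF pm[OF vF] g]] by simp
    qed
    finally show ?thesis by simp
  qed
  have "(\<lambda>k. Cp * cc k + cmod \<mu> * N (\<lambda>x. \<psi> x * v (r k) x - g x)) \<longlonglongrightarrow> Cp * 0 + cmod \<mu> * 0"
    by (intro tendsto_intros cc0 lim)
  then have "N (\<lambda>x. \<psi> x * g x - \<mu> * g x) \<le> 0"
    using eigle by (intro LIMSEQ_le_const) auto
  moreover have "N (\<lambda>x. \<psi> x * g x - \<mu> * g x) \<ge> 0" using N_nonneg[OF diff_in[OF pm[OF g] scale_in[OF g]]] .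
  ultimately have "N (\<lambda>x. \<psi> x * g x - \<mu> * g x) = 0" by linarith
  then have "(\<lambda>x. \<psi> x * g x - \<mu> * g x) = (\<lambda>x. 0)" using N_zero_iff[OF diff_in[OF pm[OF g] scale_in[OF g]]] by blast
  then have eg: "\<psi> x * g x = \<mu> * g x" for x by (metis eq_iff_diff_eq_0)
  define e where "e = (\<lambda>x. complex_of_real (1 / N g) * g x)"
  have "e \<in> F \<and> N e = 1" unfolding e_def by (rule normalize[OF g gnz])
  moreover have "\<psi> x * e x = \<mu> * e x" for x unfolding e_def using eg[of x]
    by (metis mult.left_commute)
  ultimately show ?thesis by blast
qed

end

context cm
begin

lemma eig_any:
  assumes "\<psi> x0 \<noteq> 0"
  shows "\<exists>e\<in>F. N e = 1 \<and> (\<forall>x. \<psi> x * e x = \<psi> x0 * e x)"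
proof -
  interpret c2: cm2 F N \<psi> Cp "\<psi> x0" x0
    using assms by unfold_locales simp_all
  show ?thesis by (rule c2.eigen)
qed

lemma finite_vals:
  fixes \<mu>s :: "nat \<Rightarrow> complex"
  assumes inj: "inj \<mu>s" and rng: "\<And>n. \<exists>x. \<psi> x = \<mu>s n"
    and eps: "\<epsilon> > 0" "\<And>n. \<epsilon> \<le> cmod (\<mu>s n)"
  shows False
proof -
  have "\<exists>e. e \<in> F \<and> N e = 1 \<and> (\<forall>x. \<psi> x * e x = \<mu>s n * e x)" for n
  proof -
    obtain x0 where x0: "\<psi> x0 = \<mu>s n" using rng by blast
    have "\<psi> x0 \<noteq> 0"
    proof
      assume "\<psi> x0 = 0"
      then have "cmod (\<mu>s n) = 0" using x0 by simp
      then show False using eps(1) eps(2)[of n] by simp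
    qed
    from eig_any[OF this] show ?thesis using x0 by auto
  qed
  then obtain es where es: "\<And>n. es n \<in> F" "\<And>n. N (es n) = 1"
    "\<And>n x. \<psi> x * es n x = \<mu>s n * es n x" by metis
  have "\<And>n. es n \<in> F \<and> N (es n) \<le> 1" using es by simp
  from pc[of es, OF this] obtain r g where r: "strict_mono r" and g: "g \<in> F"
    and lim: "(\<lambda>n. N (\<lambda>x. \<psi> x * es (r n) x - g x)) \<longlonglongrightarrow> 0" by blast
  have ptw: "(\<lambda>k. \<psi> x * es (r k) x) \<longlonglongrightarrow> g x" for x
    using pointwise[of "\<lambda>k x. \<psi> x * es (r k) x" g x] pm[OF es(1)] g lim by simp
  have val: "es n x \<noteq> 0 \<Longrightarrow> \<psi> x = \<mu>s n" for n x using es(3)[of x n] by simp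
  have ev0: "\<exists>K. \<forall>k\<ge>K. es (r k) x = 0" for x
  proof (cases "\<exists>k0. es (r k0) x \<noteq> 0")
    case True
    then obtain k0 where k0: "es (r k0) x \<noteq> 0" by blast
    have "es (r k) x = 0" if "k \<ge> Suc k0" for k
    proof (rule ccontr)
      assume "es (r k) x \<noteq> 0"
      then have "\<mu>s (r k) = \<mu>s (r k0)" using val k0 by metis
      then have "r k = r k0" using inj by (simp add: inj_eq)
      then have "k = k0" using strict_mono_eq[OF r] by blast
      then show False using that by simp
    qed
    then show ?thesis by blast
  next
    case False then show ?thesis by auto
  qed
  have g0: "g x = 0" for x
  proof -
    obtain K where K: "\<forall>k\<ge>K. es (r k) x = 0" using ev0 by blast
    have "eventually (\<lambda>k. \<psi> x * es (r k) x = 0) sequentially"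
      unfolding eventually_sequentially using K by auto
    from Lim_transform_eventually[OF ptw this] show ?thesis by (simp add: LIMSEQ_const_iff)
  qed
  then have gz: "g = (\<lambda>x. 0)" by (rule ext)
  have "\<epsilon> \<le> N (\<lambda>x. \<psi> x * es (r k) x - g x)" for k
  proof -
    have "(\<lambda>x. \<psi> x * es (r k) x - g x) = (\<lambda>x. \<mu>s (r k) * es (r k) x)"
      unfolding gz by (rule ext, subst diff_zero, rule es(3))
    then have "N (\<lambda>x. \<psi> x * es (r k) x - g x) = cmod (\<mu>s (r k))" using N_scale[OF es(1)] es(2) by simp
    then show ?thesis using eps(2) by simp
  qed
  then have "\<epsilon> \<le> 0" by (intro LIMSEQ_le_const[OF lim]) auto
  then show False using eps(1) by simp
qed

end

theorem lemma4p3: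
  fixes F :: "('a::t2_space \<Rightarrow> complex) set" and N :: "('a \<Rightarrow> complex) \<Rightarrow> real"
    and \<omega> :: "'a \<Rightarrow> complex"
  assumes "connected (UNIV :: 'a set)"
    and "banach_space_of_cfuns F N"
    and "infinite_dimensional F"
    and "one_independent F"
    and "\<forall>T. bounded_op_on F N T \<longrightarrow>
           (\<exists>(lam::complex) K. compact_op_on F N K \<and> (\<forall>f\<in>F. T f = (\<lambda>x. lam * f x + K f x)))"
    and "multiplier F N \<omega>"
  shows "\<exists>c. \<forall>x. \<omega> x = c"
proof -
  have sub: "cfun_subspace F" and nrm: "is_norm_on F N" and sco: "stronger_than_compact_open F N"
    using assms(2) unfolding banach_space_of_cfuns_def by auto
  interpret bfs F N by unfold_locales (rule sub nrm sco)+
  obtain C where C: "\<forall>f\<in>F. N (\<lambda>x. \<omega> x * f x) \<le> C * N f"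
    and mF: "\<forall>f\<in>F. (\<lambda>x. \<omega> x * f x) \<in> F"
    using assms(6) unfolding multiplier_def by blast
  have "bounded_op_on F N (\<lambda>f x. \<omega> x * f x)"
    unfolding bounded_op_on_def linear_op_on_def using mF C
    by (auto simp: algebra_simps)
  then obtain lam K where K: "compact_op_on F N K"
    and KT: "\<forall>f\<in>F. (\<lambda>x. \<omega> x * f x) = (\<lambda>x. lam * f x + K f x)"
    using assms(5) by blast
  define \<psi> where "\<psi> x = \<omega> x - lam" for x
  have Kpsi: "K f = (\<lambda>x. \<psi> x * f x)" if "f \<in> F" for f
  proof
    fix x
    have "\<omega> x * f x = lam * f x + K f x" using fun_cong[OF KT[rule_format, OF that], of x] by simp
    then show "K f x = \<psi> x * f x" unfolding \<psi>_def by (simp add: algebra_simps)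
  qed
  have pm: "(\<lambda>x. \<psi> x * f x) \<in> F" if "f \<in> F" for f
    using K that Kpsi[OF that] unfolding compact_op_on_def linear_op_on_def by metis
  have pb: "N (\<lambda>x. \<psi> x * f x) \<le> (C + cmod lam) * N f" if f: "f \<in> F" for f
  proof -
    have eqf: "(\<lambda>x. \<psi> x * f x) = (\<lambda>x. \<omega> x * f x + (- lam) * f x)" unfolding \<psi>_def by (auto simp: algebra_simps)
    have "N (\<lambda>x. \<psi> x * f x) \<le> N (\<lambda>x. \<omega> x * f x) + N (\<lambda>x. (- lam) * f x)"
      unfolding eqf by (rule N_add[OF mF[rule_format, OF f] scale_in[OF f]])
    also have "\<dots> \<le> C * N f + cmod lam * N f" using C f N_scale[OF f, of "- lam"] by simp
    finally show ?thesis by (simp add: algebra_simps)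
  qed
  have pc: "\<exists>r g. strict_mono r \<and> g \<in> F \<and> (\<lambda>n. N (\<lambda>x. \<psi> x * s (r n) x - g x)) \<longlonglongrightarrow> 0"
    if s: "\<And>n. s n \<in> F \<and> N (s n) \<le> 1" for s :: "nat \<Rightarrow> 'a \<Rightarrow> complex"
  proof -
    from K s obtain r g where "strict_mono r" "g \<in> F" "(\<lambda>n. N (\<lambda>x. K (s (r n)) x - g x)) \<longlonglongrightarrow> 0"
      unfolding compact_op_on_def by blast
    moreover have "K (s (r n)) = (\<lambda>x. \<psi> x * s (r n) x)" for n using Kpsi s by blast
    ultimately show ?thesis by auto
  qed
  have onei: "\<exists>f\<in>F. f x \<noteq> 0" for x using assms(4) unfolding one_independent_def by blast
  interpret cm F N \<psi> "C + cmod lam"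
    apply unfold_locales
       apply (erule pm)
      apply (erule pb)
    subgoal for s using pc[of s] by blast
    apply (rule onei)
    done
  have contF: "continuous_on UNIV f" if "f \<in> F" for f
    using sub that unfolding cfun_subspace_def by blast
  have "isCont \<omega> x" for x
  proof -
    obtain f where f: "f \<in> F" "f x \<noteq> 0" using onei by blast
    have op: "open {y. f y \<noteq> (\<lambda>y. 0) y}" by (rule open_Collect_neq[OF contF[OF f(1)]]) simp
    have ev: "eventually (\<lambda>y. \<omega> y = \<omega> y * f y / f y) (nhds x)"
      unfolding eventually_nhds using op f(2) by (intro exI[of _ "{y. f y \<noteq> 0}"]) auto
    have "isCont (\<lambda>y. \<omega> y * f y / f y) x"
      using contF[OF mF[rule_format, OF f(1)]] contF[OF f(1)] f(2)
      by (intro isCont_divide) (auto simp: continuous_on_eq_continuous_at)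
    then show ?thesis using isCont_cong[OF ev] by simp
  qed
  then have contw: "continuous_on UNIV \<omega>" by (intro continuous_at_imp_continuous_on) auto
  have "continuous_on UNIV \<psi>" unfolding \<psi>_def by (intro continuous_intros contw)
  then have conn: "connected (range \<psi>)" by (rule connected_continuous_image[OF _ assms(1)])
  show ?thesis
  proof (rule ccontr)
    assume nc: "\<not> (\<exists>c. \<forall>x. \<omega> x = c)"
    have nc': "\<exists>x. \<psi> x \<noteq> c" for c
    proof (rule ccontr)
      assume "\<not> (\<exists>x. \<psi> x \<noteq> c)"
      then have "\<forall>x. \<omega> x = c + lam" unfolding \<psi>_def by (auto simp: algebra_simps)
      then show False using nc by blast
    qed
    obtain x0 where x0: "\<psi> x0 \<noteq> 0" using nc'[of 0] by blast
    define \<mu>0 where "\<mu>0 = \<psi> x0"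
    have "range \<psi> \<noteq> {z}" for z using nc'[of z] by auto
    then have "\<mu>0 islimpt range \<psi>"
      by (intro connected_imp_perfect[OF conn]) (auto simp: \<mu>0_def)
    then have inf: "infinite (range \<psi> \<inter> ball \<mu>0 (cmod \<mu>0 / 2))"
      unfolding islimpt_eq_infinite_ball using x0 \<mu>0_def by simp
    from infinite_countable_subset[OF inf] obtain \<mu>s :: "nat \<Rightarrow> complex"
      where mus: "inj \<mu>s" "range \<mu>s \<subseteq> range \<psi> \<inter> ball \<mu>0 (cmod \<mu>0 / 2)" by blast
    show False
    proof (rule finite_vals[OF mus(1)])
      show "\<exists>x. \<psi> x = \<mu>s n" for n using mus(2) by (metis IntD1 rangeE rangeI subsetD)
      show "cmod \<mu>0 / 2 > 0" using x0 \<mu>0_def by simp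
      show "cmod \<mu>0 / 2 \<le> cmod (\<mu>s n)" for n
      proof -
        have "\<mu>s n \<in> ball \<mu>0 (cmod \<mu>0 / 2)" using mus(2) by blast
        then have "dist \<mu>0 (\<mu>s n) < cmod \<mu>0 / 2" by simp
        then have "cmod (\<mu>0 - \<mu>s n) < cmod \<mu>0 / 2" by (simp add: dist_norm)
        moreover have "cmod \<mu>0 \<le> cmod (\<mu>s n) + cmod (\<mu>0 - \<mu>s n)" by (rule norm_triangle_sub)
        ultimately show ?thesis by linarith
      qed
    qed
  qed
qed


end
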